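(* Let $\mathcal{P}$ be a BMS channel and let $(C_i)_{i\ge1}$ be a sequence of binary codes with rates $(R_i)_{i\ge1}$ such that $\limsup_{i\to\infty}R_i<C(\mathcal{P})$ and such that a uniformly random codeword of $C_i$ has each coordinate marginally distributed as Bernoulli$(1/2)$. Let $P_e(C_i,\mathcal{P},j)$ be the probability that the maximum-likelihood decoder decodes coordinate $j$ of a uniformly random codeword of $C_i$ incorrectly given the channel outputs at all other coordinates, and assume $P_e(C_i,\mathcal{P},j)$ does not depend on $j$; denote it $P_e(C_i,\mathcal{P})$. Then there exists $c>0$ such that $P_e(C_i,\mathcal{P})<1/2-c$ for all sufficiently large $i$.
   Context: A binary code $C\subseteq\{0,1\}^n$ has rate $\log_2|C|/n$. A BMS channel is a conditional distribution $\mathcal{P}(y\mid x)$, $x\in\{0,1\}$, $y$ in a (finite or countable) output alphabet $\mathcal{Y}$, together with an involution $\sigma$ of $\mathcal{Y}$ with $\mathcal{P}(y\mid1)=\mathcal{P}(\sigma(y)\mid0)$; it acts independently on each coordinate. Its capacity is $C(\mathcal{P})=\frac12\sum_{x\in\{0,1\},y\in\mathcal{Y}}\mathcal{P}(y\mid x)\log_2\frac{\mathcal{P}(y\mid x)}{\mathcal{P}(y\mid0)/2+\mathcal{P}(y\mid1)/2}$. *)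

theory Defs
  imports "HOL-Analysis.Analysis" "HOL-Library.Extended_Real"
begin

text \<open>Binary input symbols are booleans (False = 0, True = 1).
  A BMS channel: transition probabilities W x y on a countable output type,
  with an involution sigma such that W 1 y = W 0 (sigma y).\<close>

definition bms_channel :: "(bool \<Rightarrow> 'y::countable \<Rightarrow> real) \<Rightarrow> bool" where
  "bms_channel W \<longleftrightarrow>
     (\<forall>x y. 0 \<le> W x y) \<and> (\<forall>x. (W x has_sum 1) UNIV) \<and>
     (\<exists>\<sigma>::'y \<Rightarrow> 'y. (\<forall>y. \<sigma> (\<sigma> y) = y) \<and> (\<forall>y. W True y = W False (\<sigma> y)))"

definition capacity :: "(bool \<Rightarrow> 'y::countable \<Rightarrow> real) \<Rightarrow> real" where
  "capacity W = (1/2) * (\<Sum>\<^sub>\<infinity>y. (\<Sum>x\<in>UNIV.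
      W x y * log 2 (W x y / (W False y / 2 + W True y / 2))))"

definition binary_code :: "nat \<Rightarrow> (nat \<Rightarrow> bool) set \<Rightarrow> bool" where
  "binary_code n C \<longleftrightarrow> C \<noteq> {} \<and> C \<subseteq> {x. \<forall>k\<ge>n. x k = False}"

definition code_rate :: "nat \<Rightarrow> (nat \<Rightarrow> bool) set \<Rightarrow> real" where
  "code_rate n C = log 2 (real (card C)) / real n"

definition ext_outputs :: "nat \<Rightarrow> nat \<Rightarrow> (nat \<Rightarrow> 'y) set" where
  "ext_outputs n j = {y. \<forall>k. (k \<ge> n \<or> k = j) \<longrightarrow> y k = undefined}"

definition joint_ext :: "nat \<Rightarrow> (nat \<Rightarrow> bool) set \<Rightarrow> (bool \<Rightarrow> 'y \<Rightarrow> real)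
    \<Rightarrow> nat \<Rightarrow> bool \<Rightarrow> (nat \<Rightarrow> 'y) \<Rightarrow> real" where
  "joint_ext n C W j b y =
     (\<Sum>x\<in>{x\<in>C. x j = b}. (\<Prod>k\<in>{..<n} - {j}. W (x k) (y k))) / real (card C)"

text \<open>Since the ML decision picks b maximizing the
  likelihood (equivalently, with uniform marginals, the joint probability), the
  error probability is the sum over outputs of the smaller joint probability
  (independent of tie-breaking).\<close>

definition Pe :: "nat \<Rightarrow> (nat \<Rightarrow> bool) set \<Rightarrow> (bool \<Rightarrow> 'y::countable \<Rightarrow> real)
    \<Rightarrow> nat \<Rightarrow> real" where
  "Pe n C W j = (\<Sum>\<^sub>\<infinity>y\<in>ext_outputs n j.
      min (joint_ext n C W j False y) (joint_ext n C W j True y))"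

end

theory Submission
  imports Defs
begin


definition Qv :: "'a set \<Rightarrow> ('a \<Rightarrow> real) \<Rightarrow> ('a \<Rightarrow> 'b) \<Rightarrow> 'b \<Rightarrow> real" where
  "Qv A p f t = sum p {a\<in>A. f a = t}"

definition Ent :: "'a set \<Rightarrow> ('a \<Rightarrow> real) \<Rightarrow> ('a \<Rightarrow> 'b) \<Rightarrow> real" where
  "Ent A p f = - (\<Sum>a\<in>A. p a * log 2 (Qv A p f (f a)))"

lemma gibbs:
  fixes a b :: real
  assumes "a > 0" "b > 0"
  shows "a * log 2 (a / b) \<ge> (a - b) / ln 2"
proof -
  have "ln (b / a) \<le> b / a - 1" using assms by (intro ln_le_minus_one) auto
  hence "ln (a / b) \<ge> 1 - b / a" using assms by (simp add: ln_div)
  hence "log 2 (a / b) \<ge> (1 - b / a) / ln 2" by (simp add: log_def divide_right_mono)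
  hence "a * log 2 (a / b) \<ge> a * ((1 - b / a) / ln 2)" using assms by (intro mult_left_mono) auto
  also have "a * ((1 - b / a) / ln 2) = (a - b) / ln 2" using assms by (simp add: field_simps)
  finally show ?thesis .
qed

lemma Qv_pos:
  assumes "finite A" "\<And>a. a \<in> A \<Longrightarrow> p a > 0" "a \<in> A"
  shows "Qv A p f (f a) \<ge> p a" "Qv A p f (f a) > 0"
proof -
  have "p a = sum p {a}" by simp
  also have "\<dots> \<le> Qv A p f (f a)" unfolding Qv_def
    using assms by (intro sum_mono2) (auto intro: less_imp_le)
  finally show "Qv A p f (f a) \<ge> p a" .
  thus "Qv A p f (f a) > 0" using assms(2)[OF assms(3)] by linarith
qed

lemma Ent_cong:
  assumes "\<And>a a'. a \<in> A \<Longrightarrow> a' \<in> A \<Longrightarrow> f a = f a' \<longleftrightarrow> g a = g a'"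
  shows "Ent A p f = Ent A p g"
proof -
  have "Qv A p f (f a) = Qv A p g (g a)" if "a \<in> A" for a
    unfolding Qv_def using assms that by (intro sum.cong) auto
  thus ?thesis unfolding Ent_def by (simp cong: sum.cong)
qed

lemma Ent_const:
  assumes "sum p A = 1"
  shows "Ent A p (\<lambda>_. c) = 0"
  using assms unfolding Ent_def Qv_def by simp

lemma sum_fiber:
  assumes "finite A"
  shows "(\<Sum>u\<in>f ` A. sum p {a\<in>A. f a = u \<and> P a}) = sum p {a\<in>A. P a}"
proof -
  have "sum p {a\<in>A. P a} = (\<Sum>u\<in>f ` {a\<in>A. P a}. sum p {a\<in>{a\<in>A. P a}. f a = u})"
    using assms by (intro sum.image_gen) auto
  also have "\<dots> = (\<Sum>u\<in>f ` A. sum p {a\<in>A. f a = u \<and> P a})"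
  proof (intro sum.mono_neutral_cong_left)
    show "\<forall>i\<in>f ` A - f ` {a \<in> A. P a}. sum p {a\<in>A. f a = i \<and> P a} = 0"
    proof
      fix i assume "i \<in> f ` A - f ` {a \<in> A. P a}"
      hence "{a\<in>A. f a = i \<and> P a} = {}" by blast
      thus "sum p {a\<in>A. f a = i \<and> P a} = 0" by (simp only: sum.empty)
    qed
  qed (use assms in auto)
  finally show ?thesis by simp
qed

lemma sum_group_Qv:
  assumes "finite A" "\<And>a. a \<in> A \<Longrightarrow> p a > 0"
  shows "(\<Sum>a\<in>A. p a / Qv A p f (f a) * G (f a)) = (\<Sum>v\<in>f ` A. G v)"
proof -
  have "(\<Sum>a\<in>A. p a / Qv A p f (f a) * G (f a))
      = (\<Sum>v\<in>f ` A. \<Sum>a\<in>{a\<in>A. f a = v}. p a / Qv A p f (f a) * G (f a))"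
    using assms by (intro sum.image_gen) auto
  also have "\<dots> = (\<Sum>v\<in>f ` A. G v)"
  proof (intro sum.cong refl)
    fix v assume v: "v \<in> f ` A"
    then obtain a0 where a0: "a0 \<in> A" "f a0 = v" by auto
    have pos: "Qv A p f v > 0" using Qv_pos[OF assms(1,2) a0(1), where f=f] a0 by auto
    have "(\<Sum>a\<in>{a\<in>A. f a = v}. p a / Qv A p f (f a) * G (f a))
        = (\<Sum>a\<in>{a\<in>A. f a = v}. p a * (G v / Qv A p f v))"
      by (intro sum.cong) auto
    also have "\<dots> = (\<Sum>a\<in>{a\<in>A. f a = v}. p a) * (G v / Qv A p f v)"
      by (rule sum_distrib_right[symmetric])
    also have "\<dots> = G v" using pos unfolding Qv_def by simp
    finally show "(\<Sum>a\<in>{a\<in>A. f a = v}. p a / Qv A p f (f a) * G (f a)) = G v" .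
  qed
  finally show ?thesis .
qed

lemma Qv_nonneg: "(\<And>a. a \<in> A \<Longrightarrow> p a > 0) \<Longrightarrow> Qv A p f t \<ge> 0"
  unfolding Qv_def by (intro sum_nonneg) (auto intro: less_imp_le)

lemma div_lem: "(p::real) > 0 \<Longrightarrow> p / (p * (x / y)) = y / x"
  by simp

lemma Ent_submod:
  fixes f :: "'a \<Rightarrow> 'b" and g :: "'a \<Rightarrow> 'c" and h :: "'a \<Rightarrow> 'd"
  assumes fin: "finite A" and pos: "\<And>a. a \<in> A \<Longrightarrow> p a > 0" and one: "sum p A = 1"
  shows "Ent A p (\<lambda>a. (f a, g a, h a)) + Ent A p h
           \<le> Ent A p (\<lambda>a. (f a, h a)) + Ent A p (\<lambda>a. (g a, h a))"
proof -
  define \<phi> where "\<phi> = (\<lambda>a. (f a, g a, h a))"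
  define Pa where "Pa = (\<lambda>a. Qv A p \<phi> (\<phi> a))"
  define Ph where "Ph = (\<lambda>a. Qv A p h (h a))"
  define Pfh where "Pfh = (\<lambda>a. Qv A p (\<lambda>a. (f a, h a)) (f a, h a))"
  define Pgh where "Pgh = (\<lambda>a. Qv A p (\<lambda>a. (g a, h a)) (g a, h a))"
  define G where "G = (\<lambda>(u,v,w). Qv A p (\<lambda>a. (f a, h a)) (u, w) * Qv A p (\<lambda>a. (g a, h a)) (v, w) / Qv A p h w)"
  define b where "b = (\<lambda>a. p a * (Pfh a * Pgh a / (Pa a * Ph a)))"
  have posa: "Pa a > 0" "Ph a > 0" "Pfh a > 0" "Pgh a > 0" if "a \<in> A" for a
    unfolding Pa_def Ph_def Pfh_def Pgh_def using Qv_pos(2)[of A p, OF fin pos] that by auto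
  have bpos: "b a > 0" if "a \<in> A" for a using posa[OF that] pos[OF that] unfolding b_def by simp
  have diff: "(Ent A p (\<lambda>a. (f a, h a)) + Ent A p (\<lambda>a. (g a, h a))) - (Ent A p \<phi> + Ent A p h)
      = (\<Sum>a\<in>A. p a * log 2 (p a / b a))"
  proof -
    have "(Ent A p (\<lambda>a. (f a, h a)) + Ent A p (\<lambda>a. (g a, h a))) - (Ent A p \<phi> + Ent A p h)
       = (\<Sum>a\<in>A. p a * log 2 (Pa a)) + (\<Sum>a\<in>A. p a * log 2 (Ph a)) - (\<Sum>a\<in>A. p a * log 2 (Pfh a)) - (\<Sum>a\<in>A. p a * log 2 (Pgh a))"
      unfolding Ent_def Pa_def Ph_def Pfh_def Pgh_def \<phi>_def by simp
    also have "\<dots> = (\<Sum>a\<in>A. p a * log 2 (Pa a) + p a * log 2 (Ph a) - p a * log 2 (Pfh a) - p a * log 2 (Pgh a))"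
      by (simp only: sum.distrib sum_subtractf)
    also have "\<dots> = (\<Sum>a\<in>A. p a * (log 2 (Pa a) + log 2 (Ph a) - log 2 (Pfh a) - log 2 (Pgh a)))"
      by (simp only: distrib_left right_diff_distrib)
    also have "\<dots> = (\<Sum>a\<in>A. p a * log 2 (p a / b a))"
    proof (intro sum.cong refl)
      fix a assume a: "a \<in> A"
      note q = posa[OF a] pos[OF a]
      have "p a / b a = (Pa a * Ph a) / (Pfh a * Pgh a)" unfolding b_def using q(5) by (rule div_lem)
      also have "log 2 \<dots> = log 2 (Pa a) + log 2 (Ph a) - log 2 (Pfh a) - log 2 (Pgh a)"
      proof -
        have "Pa a * Ph a \<noteq> 0" "Pfh a * Pgh a \<noteq> 0" using q by auto
        hence "log 2 ((Pa a * Ph a) / (Pfh a * Pgh a)) = log 2 (Pa a * Ph a) - log 2 (Pfh a * Pgh a)"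
          by (simp add: log_divide)
        also have "\<dots> = log 2 (Pa a) + log 2 (Ph a) - (log 2 (Pfh a) + log 2 (Pgh a))"
          using q by (simp add: log_mult)
        finally show ?thesis by simp
      qed
      finally show "p a * (log 2 (Pa a) + log 2 (Ph a) - log 2 (Pfh a) - log 2 (Pgh a)) = p a * log 2 (p a / b a)"
        by simp
    qed
    finally show ?thesis .
  qed
  have "(\<Sum>a\<in>A. p a * log 2 (p a / b a)) \<ge> (\<Sum>a\<in>A. (p a - b a) / ln 2)"
  proof (rule sum_mono)
    fix a assume a: "a \<in> A"
    show "(p a - b a) / ln 2 \<le> p a * log 2 (p a / b a)" by (rule gibbs[OF pos[OF a] bpos[OF a]])
  qed
  also have "(\<Sum>a\<in>A. (p a - b a) / ln 2) = (1 - sum b A) / ln 2"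
    using one by (simp add: sum_divide_distrib[symmetric] sum_subtractf)
  finally have ge: "(\<Sum>a\<in>A. p a * log 2 (p a / b a)) \<ge> (1 - sum b A) / ln 2" .
  have "sum b A = (\<Sum>a\<in>A. p a / Qv A p \<phi> (\<phi> a) * G (\<phi> a))"
    unfolding b_def G_def \<phi>_def Pa_def Ph_def Pfh_def Pgh_def by (intro sum.cong refl) (simp add: divide_inverse mult_ac)
  also have "\<dots> = (\<Sum>t\<in>\<phi> ` A. G t)" by (rule sum_group_Qv[OF fin pos])
  also have "\<dots> \<le> (\<Sum>t\<in>f ` A \<times> (g ` A \<times> h ` A). G t)"
  proof (rule sum_mono2)
    show "finite (f ` A \<times> (g ` A \<times> h ` A))" using fin by auto
    show "\<phi> ` A \<subseteq> f ` A \<times> (g ` A \<times> h ` A)" unfolding \<phi>_def by auto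
    have qn: "\<And>(f :: 'a \<Rightarrow> 'e) t. Qv A p f t \<ge> 0" by (rule Qv_nonneg) (rule pos)
    show "\<And>t. t \<in> f ` A \<times> g ` A \<times> h ` A - \<phi> ` A \<Longrightarrow> 0 \<le> G t"
      unfolding G_def by (clarify, intro divide_nonneg_nonneg mult_nonneg_nonneg qn)
  qed
  also have "\<dots> = (\<Sum>u\<in>f ` A. \<Sum>v\<in>g ` A. \<Sum>w\<in>h ` A. G (u, v, w))"
    by (simp add: sum.cartesian_product)
  also have "\<dots> = (\<Sum>u\<in>f ` A. \<Sum>w\<in>h ` A. \<Sum>v\<in>g ` A. G (u, v, w))"
    by (intro sum.cong refl sum.swap)
  also have "\<dots> = (\<Sum>w\<in>h ` A. \<Sum>u\<in>f ` A. \<Sum>v\<in>g ` A. G (u, v, w))" by (rule sum.swap)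
  also have "\<dots> = (\<Sum>w\<in>h ` A. Qv A p h w)"
  proof (intro sum.cong refl)
    fix w assume w: "w \<in> h ` A"
    then obtain a0 where a0: "a0 \<in> A" "h a0 = w" by auto
    have Qp: "Qv A p h w > 0" using Qv_pos(2)[of A p, OF fin pos a0(1), where f=h] a0 by auto
    have sf: "(\<Sum>u\<in>f ` A. Qv A p (\<lambda>a. (f a, h a)) (u, w)) = Qv A p h w"
      unfolding Qv_def using sum_fiber[OF fin, where f=f and p=p and P="\<lambda>a. h a = w"] by simp
    have sg: "(\<Sum>v\<in>g ` A. Qv A p (\<lambda>a. (g a, h a)) (v, w)) = Qv A p h w"
      unfolding Qv_def using sum_fiber[OF fin, where f=g and p=p and P="\<lambda>a. h a = w"] by simp
    have "(\<Sum>u\<in>f ` A. \<Sum>v\<in>g ` A. G (u, v, w))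
       = (\<Sum>u\<in>f ` A. Qv A p (\<lambda>a. (f a, h a)) (u, w)) * (\<Sum>v\<in>g ` A. Qv A p (\<lambda>a. (g a, h a)) (v, w)) / Qv A p h w"
      unfolding G_def by (simp add: sum_product sum_divide_distrib)
    also have "\<dots> = Qv A p h w" using Qp sf sg by simp
    finally show "(\<Sum>u\<in>f ` A. \<Sum>v\<in>g ` A. G (u, v, w)) = Qv A p h w" .
  qed
  also have "\<dots> = sum p A" unfolding Qv_def by (rule sum.image_gen[symmetric, OF fin])
  finally have "sum b A \<le> 1" using one by simp
  hence "(1 - sum b A) / ln 2 \<ge> 0" by simp
  with ge diff show ?thesis unfolding \<phi>_def by linarith
qed


definition phi :: "real \<Rightarrow> real" where "phi t = - (t * log 2 t)"

lemma restrict_eq_iff: "restrict y S = restrict y' S \<longleftrightarrow> (\<forall>i\<in>S. y i = y' i)"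
  by (auto simp: fun_eq_iff restrict_def)

lemma split_k:
  assumes "k < (m::nat)"
  shows "(\<forall>i\<in>{..<m}. P i) \<longleftrightarrow> P k \<and> (\<forall>i\<in>{Suc k..<m}. P i) \<and> (\<forall>i\<in>{..<k}. P i)"
proof
  assume "P k \<and> (\<forall>i\<in>{Suc k..<m}. P i) \<and> (\<forall>i\<in>{..<k}. P i)"
  thus "\<forall>i\<in>{..<m}. P i"
    by (metis atLeastLessThan_iff lessThan_iff linorder_neqE_nat Suc_leI)
qed (use assms in auto)

lemma gibbs0:
  fixes a c :: real
  assumes "a \<ge> 0" "c > 0"
  shows "a * log 2 a - a * log 2 c \<ge> (a - c) / ln 2"
proof (cases "a = 0")
  case True thus ?thesis using assms by simp
next
  case False
  hence a: "a > 0" using assms by simp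
  have "a * log 2 a - a * log 2 c = a * log 2 (a / c)" using a assms by (simp add: log_divide right_diff_distrib)
  also have "\<dots> \<ge> (a - c) / ln 2" by (rule gibbs[OF a assms(2)])
  finally show ?thesis .
qed

lemma phi_zero[simp]: "phi 0 = 0" by (simp add: phi_def)

lemma phi_concave:
  fixes l a b :: real
  assumes l: "0 \<le> l" "l \<le> 1" and ab: "a \<ge> 0" "b \<ge> 0"
  shows "l * phi a + (1 - l) * phi b \<le> phi (l * a + (1 - l) * b)"
proof -
  define c where "c = l * a + (1 - l) * b"
  have c0: "c \<ge> 0" unfolding c_def using l ab by simp
  show ?thesis
  proof (cases "c = 0")
    case True
    have "l * a = 0" "(1 - l) * b = 0" using True l ab unfolding c_def
      by (smt (verit) mult_nonneg_nonneg)+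
    hence "l * phi a = 0" "(1 - l) * phi b = 0" unfolding phi_def by (auto simp: mult.assoc[symmetric])
    moreover have "phi (l * a + (1 - l) * b) = 0" using True unfolding c_def by simp
    ultimately show ?thesis by linarith
  next
    case False
    hence cp: "c > 0" using c0 by simp
    have g1: "a * log 2 a - a * log 2 c \<ge> (a - c) / ln 2" by (rule gibbs0[OF ab(1) cp])
    have g2: "b * log 2 b - b * log 2 c \<ge> (b - c) / ln 2" by (rule gibbs0[OF ab(2) cp])
    have "phi c - l * phi a - (1 - l) * phi b
        = l * (a * log 2 a - a * log 2 c) + (1 - l) * (b * log 2 b - b * log 2 c)"
      unfolding phi_def c_def by (simp add: algebra_simps)
    also have "\<dots> \<ge> l * ((a - c) / ln 2) + (1 - l) * ((b - c) / ln 2)"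
      using g1 g2 l by (intro add_mono mult_left_mono) auto
    also have "l * ((a - c) / ln 2) + (1 - l) * ((b - c) / ln 2) = (l * a + (1 - l) * b - c) / ln 2"
      by (simp add: field_simps)
    also have "\<dots> = 0" unfolding c_def by simp
    finally show ?thesis unfolding c_def by simp
  qed
qed

lemma cap_term:
  fixes a avg :: real
  assumes "a \<ge> 0" "avg \<ge> a / 2"
  shows "a * log 2 (a / avg) = a * log 2 a - a * log 2 avg"
proof (cases "a = 0")
  case False
  hence "a > 0" "avg > 0" using assms by auto
  thus ?thesis by (simp add: log_divide right_diff_distrib)
qed simp

locale core =
  fixes m :: nat and C :: "(nat \<Rightarrow> bool) set" and V :: "bool \<Rightarrow> 'z \<Rightarrow> real" and Z :: "'z set"
  assumes finZ: "finite Z" and Vnn: "\<And>b z. V b z \<ge> 0" and Vsum: "\<And>b. sum (V b) Z = 1"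
    and finC: "finite C" and Cne: "C \<noteq> {}"
    and bal: "\<And>j. j < m \<Longrightarrow> 2 * card {x\<in>C. x j} = card C"
begin

definition YY where "YY = PiE {..<m} (\<lambda>_. Z)"
definition lik where "lik x y = (\<Prod>k<m. V (x k) (y k))"
definition pj where "pj a = lik (fst a) (snd a) / card C"
definition AA where "AA = {a \<in> C \<times> YY. pj a > 0}"
definition Ef where "Ef S = Ent AA pj (\<lambda>a. restrict (snd a) S)"
definition HV where "HV b = (\<Sum>z\<in>Z. phi (V b z))"

lemma cardC: "card C > 0" using finC Cne by (simp add: card_gt_0_iff)

lemma finYY: "finite YY" unfolding YY_def using finZ by (intro finite_PiE) auto

lemma finAA: "finite AA" unfolding AA_def using finC finYY by auto

lemma lik_nn: "lik x y \<ge> 0" unfolding lik_def using Vnn by (intro prod_nonneg) auto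

lemma pj_nn: "pj a \<ge> 0" unfolding pj_def using lik_nn by auto

lemma pj_pos: "a \<in> AA \<Longrightarrow> pj a > 0" unfolding AA_def by auto

lemma lik_marg:
  assumes k: "k < m"
  shows "(\<Sum>y\<in>YY. lik x y * G (y k)) = (\<Sum>z\<in>Z. V (x k) z * G z)"
proof -
  define f where "f = (\<lambda>i z. if i = k then V (x i) z * G z else V (x i) z)"
  have "(\<Prod>i\<in>{..<m}. \<Sum>z\<in>Z. f i z) = (\<Sum>y\<in>PiE {..<m} (\<lambda>_. Z). \<Prod>i\<in>{..<m}. f i (y i))"
    using finZ by (intro prod_sum_PiE) auto
  moreover have "(\<Prod>i\<in>{..<m}. \<Sum>z\<in>Z. f i z) = (\<Sum>z\<in>Z. V (x k) z * G z)"
  proof -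
    have "(\<Prod>i\<in>{..<m}. \<Sum>z\<in>Z. f i z) = (\<Sum>z\<in>Z. f k z) * (\<Prod>i\<in>{..<m}-{k}. \<Sum>z\<in>Z. f i z)"
      using k by (intro prod.remove) auto
    also have "(\<Prod>i\<in>{..<m}-{k}. \<Sum>z\<in>Z. f i z) = 1"
      by (intro prod.neutral) (auto simp: f_def Vsum)
    finally show ?thesis by (simp add: f_def)
  qed
  moreover have "(\<Prod>i\<in>{..<m}. f i (y i)) = lik x y * G (y k)" for y
  proof -
    have "(\<Prod>i\<in>{..<m}. f i (y i)) = f k (y k) * (\<Prod>i\<in>{..<m}-{k}. f i (y i))"
      using k by (intro prod.remove) auto
    also have "(\<Prod>i\<in>{..<m}-{k}. f i (y i)) = (\<Prod>i\<in>{..<m}-{k}. V (x i) (y i))"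
      by (intro prod.cong) (auto simp: f_def)
    also have "lik x y = V (x k) (y k) * (\<Prod>i\<in>{..<m}-{k}. V (x i) (y i))"
      unfolding lik_def using k by (intro prod.remove) auto
    ultimately show ?thesis by (simp add: f_def)
  qed
  ultimately show ?thesis unfolding YY_def by simp
qed

lemma lik_sum: "(\<Sum>y\<in>YY. lik x y) = 1"
proof (cases "m = 0")
  case True thus ?thesis unfolding YY_def lik_def by simp
next
  case False
  hence "0 < m" by simp
  from lik_marg[OF this, of x "\<lambda>_. 1"] show ?thesis by (simp add: Vsum)
qed

lemma sum_CY: "(\<Sum>a\<in>C \<times> YY. F a) = (\<Sum>x\<in>C. \<Sum>y\<in>YY. F (x, y))"
  by (simp add: sum.cartesian_product)

lemma sum_AA: "(\<Sum>a\<in>AA. pj a * F a) = (\<Sum>a\<in>C \<times> YY. pj a * F a)"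
proof (rule sum.mono_neutral_left)
  show "finite (C \<times> YY)" using finC finYY by auto
  show "AA \<subseteq> C \<times> YY" unfolding AA_def by auto
  show "\<forall>i\<in>C \<times> YY - AA. pj i * F i = 0"
  proof
    fix i assume "i \<in> C \<times> YY - AA"
    hence "pj i = 0" using pj_nn[of i] unfolding AA_def by auto
    thus "pj i * F i = 0" by simp
  qed
qed

lemma sum_pj: "sum pj AA = 1"
proof -
  have "sum pj AA = (\<Sum>a\<in>AA. pj a * 1)" by simp
  also have "\<dots> = (\<Sum>a\<in>C \<times> YY. pj a * 1)" by (rule sum_AA)
  also have "\<dots> = (\<Sum>x\<in>C. \<Sum>y\<in>YY. lik x y / card C)" unfolding sum_CY pj_def by simp
  also have "\<dots> = (\<Sum>x\<in>C. 1 / card C)"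
    by (intro sum.cong refl) (simp add: sum_divide_distrib[symmetric] lik_sum)
  also have "\<dots> = 1" using cardC by simp
  finally show ?thesis .
qed

lemma bal_sum:
  fixes F :: "bool \<Rightarrow> real"
  assumes k: "k < m"
  shows "(\<Sum>x\<in>C. F (x k)) = card C * (F False + F True) / 2"
proof -
  have C: "C = {x\<in>C. x k} \<union> {x\<in>C. \<not> x k}" by auto
  have "(\<Sum>x\<in>C. F (x k)) = (\<Sum>x\<in>{x\<in>C. x k}. F (x k)) + (\<Sum>x\<in>{x\<in>C. \<not> x k}. F (x k))"
    using finC by (subst C, intro sum.union_disjoint) auto
  also have "\<dots> = card {x\<in>C. x k} * F True + card {x\<in>C. \<not> x k} * F False" by simp
  also have "real (card {x\<in>C. \<not> x k}) = real (card {x\<in>C. x k})"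
  proof -
    have "card C = card {x\<in>C. x k} + card {x\<in>C. \<not> x k}"
      using finC by (subst C, intro card_Un_disjoint) auto
    thus ?thesis using bal[OF k] by simp
  qed
  finally have s: "(\<Sum>x\<in>C. F (x k)) = real (card {x\<in>C. x k}) * F True + real (card {x\<in>C. x k}) * F False" .
  have "real (card C) = 2 * real (card {x\<in>C. x k})" by (subst bal[OF k, symmetric]) simp
  thus ?thesis using s by (simp add: algebra_simps)
qed


lemma Ef_empty: "Ef {} = 0"
proof -
  have "Ef {} = Ent AA pj (\<lambda>_. (\<lambda>_. undefined) :: nat \<Rightarrow> 'z)" unfolding Ef_def by (simp add: restrict_def)
  also have "\<dots> = 0" by (rule Ent_const[OF sum_pj])
  finally show ?thesis .
qed

lemma Ef_step:
  assumes k: "k < m"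
  shows "Ef {..<m} + Ef {..<k} \<le> Ef {..<Suc k} + Ef ({..<m}-{k})"
proof -
  have sm: "Ent AA pj (\<lambda>a. (snd a k, restrict (snd a) {Suc k..<m}, restrict (snd a) {..<k})) + Ent AA pj (\<lambda>a. restrict (snd a) {..<k})
     \<le> Ent AA pj (\<lambda>a. (snd a k, restrict (snd a) {..<k})) + Ent AA pj (\<lambda>a. (restrict (snd a) {Suc k..<m}, restrict (snd a) {..<k}))"
    by (rule Ent_submod[OF finAA pj_pos sum_pj])
  have e1: "Ent AA pj (\<lambda>a. (snd a k, restrict (snd a) {Suc k..<m}, restrict (snd a) {..<k})) = Ef {..<m}"
    unfolding Ef_def by (rule Ent_cong) (simp add: restrict_eq_iff split_k[OF k])
  have e2: "Ent AA pj (\<lambda>a. (snd a k, restrict (snd a) {..<k})) = Ef {..<Suc k}"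
    unfolding Ef_def by (rule Ent_cong) (simp add: restrict_eq_iff lessThan_Suc)
  have sp: "(\<forall>i\<in>{..<m}-{k}. P i) \<longleftrightarrow> (\<forall>i\<in>{Suc k..<m}. P i) \<and> (\<forall>i\<in>{..<k}. P i)" for P
  proof
    assume "(\<forall>i\<in>{Suc k..<m}. P i) \<and> (\<forall>i\<in>{..<k}. P i)"
    thus "\<forall>i\<in>{..<m}-{k}. P i"
      by (metis DiffE atLeastLessThan_iff lessThan_iff linorder_neqE_nat Suc_leI singletonI)
  qed (use k in auto)
  have e3: "Ent AA pj (\<lambda>a. (restrict (snd a) {Suc k..<m}, restrict (snd a) {..<k})) = Ef ({..<m}-{k})"
    unfolding Ef_def by (rule Ent_cong) (simp add: restrict_eq_iff sp)
  show ?thesis using sm unfolding e1 e2 e3 by (simp add: Ef_def)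
qed

lemma Han: "(\<Sum>k<m. Ef {..<m} - Ef ({..<m}-{k})) \<le> Ef {..<m}"
proof -
  have "(\<Sum>k<m. Ef {..<m} - Ef ({..<m}-{k})) \<le> (\<Sum>k<m. Ef {..<Suc k} - Ef {..<k})"
    using Ef_step by (intro sum_mono) (simp add: algebra_simps)
  also have "\<dots> = Ef {..<m} - Ef {..<0}" by (rule sum_lessThan_telescope)
  also have "\<dots> = Ef {..<m}" using Ef_empty by simp
  finally show ?thesis .
qed

lemma lik_pos_factor:
  assumes "lik x y > 0" "k < m"
  shows "V (x k) (y k) > 0"
proof -
  have "V (x k) (y k) \<noteq> 0"
  proof
    assume "V (x k) (y k) = 0"
    hence "lik x y = 0" unfolding lik_def using assms(2) by (intro prod_zero) auto
    thus False using assms(1) by simp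
  qed
  thus ?thesis using Vnn[of "x k" "y k"] by linarith
qed

lemma log_lik:
  assumes "lik x y > 0"
  shows "log 2 (lik x y) = (\<Sum>k<m. log 2 (V (x k) (y k)))"
proof -
  have nz: "\<And>k. k \<in> {..<m} \<Longrightarrow> V (x k) (y k) \<noteq> 0" using lik_pos_factor[OF assms] by force
  have "log 2 (lik x y) = ln (lik x y) / ln 2" by (simp add: log_def)
  also have "ln (lik x y) = (\<Sum>k<m. ln (V (x k) (y k)))" unfolding lik_def by (rule ln_prod) (use nz in auto)
  finally show ?thesis by (simp add: log_def sum_divide_distrib)
qed

lemma entA: "Ef {..<m} \<le> log 2 (card C) + m * ((HV False + HV True) / 2)"
proof -
  define f where "f = (\<lambda>a::(nat\<Rightarrow>bool)\<times>(nat\<Rightarrow>'z). restrict (snd a) {..<m})"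
  have "Ef {..<m} = - (\<Sum>a\<in>AA. pj a * log 2 (Qv AA pj f (f a)))" unfolding Ef_def Ent_def f_def ..
  also have "\<dots> \<le> - (\<Sum>a\<in>AA. pj a * log 2 (pj a))"
  proof -
    have "(\<Sum>a\<in>AA. pj a * log 2 (pj a)) \<le> (\<Sum>a\<in>AA. pj a * log 2 (Qv AA pj f (f a)))"
    proof (rule sum_mono)
      fix a assume a: "a \<in> AA"
      have q: "Qv AA pj f (f a) \<ge> pj a" by (rule Qv_pos(1)[of AA pj, OF finAA pj_pos a])
      have "log 2 (pj a) \<le> log 2 (Qv AA pj f (f a))" using q pj_pos[OF a] by simp
      thus "pj a * log 2 (pj a) \<le> pj a * log 2 (Qv AA pj f (f a))" using pj_pos[OF a] by (simp add: mult_left_mono)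
    qed
    thus ?thesis by simp
  qed
  also have "(\<Sum>a\<in>AA. pj a * log 2 (pj a)) = (\<Sum>a\<in>AA. pj a * ((\<Sum>k<m. log 2 (V (fst a k) (snd a k))) - log 2 (card C)))"
  proof (intro sum.cong refl)
    fix a assume a: "a \<in> AA"
    have lp: "lik (fst a) (snd a) > 0" using pj_pos[OF a] cardC unfolding pj_def by (simp add: zero_less_divide_iff)
    have "log 2 (pj a) = log 2 (lik (fst a) (snd a)) - log 2 (card C)"
      unfolding pj_def using lp cardC by (simp add: log_divide)
    thus "pj a * log 2 (pj a) = pj a * ((\<Sum>k<m. log 2 (V (fst a k) (snd a k))) - log 2 (card C))"
      using log_lik[OF lp] by simp
  qed
  also have "\<dots> = (\<Sum>k<m. \<Sum>a\<in>AA. pj a * log 2 (V (fst a k) (snd a k))) - log 2 (card C)"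
  proof -
    have "(\<Sum>a\<in>AA. pj a * ((\<Sum>k<m. log 2 (V (fst a k) (snd a k))) - log 2 (card C)))
        = (\<Sum>a\<in>AA. pj a * (\<Sum>k<m. log 2 (V (fst a k) (snd a k)))) - (\<Sum>a\<in>AA. pj a * log 2 (card C))"
      by (simp only: right_diff_distrib sum_subtractf)
    also have "(\<Sum>a\<in>AA. pj a * log 2 (card C)) = log 2 (card C)"
      by (simp only: sum_distrib_right[symmetric] sum_pj mult_1)
    also have "(\<Sum>a\<in>AA. pj a * (\<Sum>k<m. log 2 (V (fst a k) (snd a k)))) = (\<Sum>a\<in>AA. \<Sum>k<m. pj a * log 2 (V (fst a k) (snd a k)))"
      by (simp only: sum_distrib_left)
    also have "\<dots> = (\<Sum>k<m. \<Sum>a\<in>AA. pj a * log 2 (V (fst a k) (snd a k)))"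
      by (rule sum.swap)
    finally show ?thesis .
  qed
  also have "(\<Sum>k<m. \<Sum>a\<in>AA. pj a * log 2 (V (fst a k) (snd a k))) = (\<Sum>k<m. - ((HV False + HV True) / 2))"
  proof (intro sum.cong refl)
    fix k assume "k \<in> {..<m}"
    hence k: "k < m" by simp
    have "(\<Sum>a\<in>AA. pj a * log 2 (V (fst a k) (snd a k))) = (\<Sum>a\<in>C \<times> YY. pj a * log 2 (V (fst a k) (snd a k)))"
      by (rule sum_AA)
    also have "\<dots> = (\<Sum>x\<in>C. (\<Sum>y\<in>YY. lik x y * log 2 (V (x k) (y k))) / card C)"
      unfolding sum_CY pj_def by (simp add: sum_divide_distrib)
    also have "\<dots> = (\<Sum>x\<in>C. (- HV (x k)) / card C)"
    proof (intro sum.cong refl)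
      fix x assume "x \<in> C"
      show "(\<Sum>y\<in>YY. lik x y * log 2 (V (x k) (y k))) / card C = (- HV (x k)) / card C"
        using lik_marg[OF k, of x "\<lambda>z. log 2 (V (x k) z)"] by (simp add: HV_def phi_def sum_negf)
    qed
    also have "\<dots> = card C * ((- HV False) / card C + (- HV True) / card C) / 2"
      by (rule bal_sum[OF k])
    also have "\<dots> = - ((HV False + HV True) / 2)" using cardC by (simp add: field_simps)
    finally show "(\<Sum>a\<in>AA. pj a * log 2 (V (fst a k) (snd a k))) = - ((HV False + HV True) / 2)" .
  qed
  also have "(\<Sum>k<m. - ((HV False + HV True) / 2)) = - (m * ((HV False + HV True) / 2))" by simp
  finally have "Ef {..<m} \<le> - (- (m * ((HV False + HV True) / 2)) - log 2 (card C))" .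
  thus ?thesis by linarith
qed


definition gh where "gh = (\<Sum>z\<in>Z. phi ((V False z + V True z) / 2))"
definition Kc where "Kc = \<bar>gh\<bar> + \<bar>HV False\<bar> + \<bar>HV True\<bar>"

lemma mix_half:
  fixes r :: real and e :: bool
  assumes "0 \<le> l" "l \<le> 1"
  shows "(\<Sum>z\<in>Z. phi (l * ((V False z + V True z) / 2) + (1 - l) * V e z)) \<ge> l * gh + (1 - l) * HV e"
proof -
  have "l * gh + (1 - l) * HV e = (\<Sum>z\<in>Z. l * phi ((V False z + V True z) / 2) + (1 - l) * phi (V e z))"
    unfolding gh_def HV_def by (simp add: sum.distrib sum_distrib_left)
  also have "\<dots> \<le> (\<Sum>z\<in>Z. phi (l * ((V False z + V True z) / 2) + (1 - l) * V e z))"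
    using assms Vnn by (intro sum_mono phi_concave) auto
  finally show ?thesis .
qed

lemma M_phi:
  fixes T mz :: real
  assumes "T > 0" "mz \<ge> 0"
  shows "(T * mz) * log 2 (T / (T * mz)) = T * phi mz"
proof (cases "mz = 0")
  case True thus ?thesis by simp
next
  case False
  hence "mz > 0" using assms by simp
  hence "log 2 (T / (T * mz)) = - log 2 mz" using assms by (simp add: log_divide log_mult)
  thus ?thesis unfolding phi_def by simp
qed

lemma mix_bound:
  fixes J0 J1 :: real
  assumes J: "J0 \<ge> 0" "J1 \<ge> 0"
  shows "(\<Sum>z\<in>Z. (V False z * J0 + V True z * J1) * log 2 ((J0 + J1) / (V False z * J0 + V True z * J1)))
           \<ge> (J0 + J1) * gh - Kc * (J0 + J1 - 2 * min J0 J1)"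
proof (cases "J0 + J1 = 0")
  case True
  hence "J0 = 0" "J1 = 0" using J by auto
  thus ?thesis by simp
next
  case False
  define T where "T = J0 + J1"
  have T: "T > 0" using False J unfolding T_def by simp
  define r where "r = J1 / T"
  have r: "0 \<le> r" "r \<le> 1" using J T unfolding r_def T_def by auto
  have J1r: "J1 = T * r" and J0r: "J0 = T * (1 - r)" using T unfolding r_def T_def by (auto simp: field_simps)
  define mm where "mm = (\<lambda>z. (1 - r) * V False z + r * V True z)"
  have mm0: "mm z \<ge> 0" for z unfolding mm_def using r Vnn by (intro add_nonneg_nonneg mult_nonneg_nonneg) auto
  have "(\<Sum>z\<in>Z. (V False z * J0 + V True z * J1) * log 2 ((J0 + J1) / (V False z * J0 + V True z * J1)))
      = (\<Sum>z\<in>Z. (T * mm z) * log 2 (T / (T * mm z)))"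
    by (intro sum.cong refl) (simp add: J0r J1r mm_def T_def[symmetric] algebra_simps)
  also have "\<dots> = T * (\<Sum>z\<in>Z. phi (mm z))"
  proof -
    have "(\<Sum>z\<in>Z. (T * mm z) * log 2 (T / (T * mm z))) = (\<Sum>z\<in>Z. T * phi (mm z))"
      by (rule sum.cong[OF refl], rule M_phi[OF T mm0])
    thus ?thesis by (simp only: sum_distrib_left)
  qed
  finally have L: "(\<Sum>z\<in>Z. (V False z * J0 + V True z * J1) * log 2 ((J0 + J1) / (V False z * J0 + V True z * J1)))
      = T * (\<Sum>z\<in>Z. phi (mm z))" .
  have Kc1: "Kc \<ge> gh - HV True" "Kc \<ge> gh - HV False" unfolding Kc_def by auto
  show ?thesis
  proof (cases "J0 \<le> J1")
    case True
    have rh: "r \<ge> 1/2" using True T unfolding r_def T_def by (simp add: field_simps)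
    have "(\<Sum>z\<in>Z. phi (mm z)) = (\<Sum>z\<in>Z. phi ((2 - 2 * r) * ((V False z + V True z) / 2) + (1 - (2 - 2 * r)) * V True z))"
      by (intro sum.cong refl arg_cong[where f=phi]) (simp add: mm_def field_simps)
    also have "\<dots> \<ge> (2 - 2 * r) * gh + (1 - (2 - 2 * r)) * HV True"
      using r rh by (intro mix_half) auto
    finally have g: "(\<Sum>z\<in>Z. phi (mm z)) \<ge> (2 - 2 * r) * gh + (2 * r - 1) * HV True" by simp
    have "T * (\<Sum>z\<in>Z. phi (mm z)) \<ge> T * ((2 - 2 * r) * gh + (2 * r - 1) * HV True)"
      using g T by (intro mult_left_mono) auto
    also have "T * ((2 - 2 * r) * gh + (2 * r - 1) * HV True) = 2 * J0 * gh + (J1 - J0) * HV True"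
      by (simp add: J0r J1r algebra_simps)
    finally have A: "T * (\<Sum>z\<in>Z. phi (mm z)) \<ge> 2 * J0 * gh + (J1 - J0) * HV True" .
    have B: "(J1 - J0) * (HV True - gh + Kc) \<ge> 0" using True Kc1 by (intro mult_nonneg_nonneg) auto
    have mn: "min J0 J1 = J0" using True by simp
    show ?thesis unfolding L mn using A B by (simp add: algebra_simps)
  next
    case False
    have rh: "r \<le> 1/2" using False T unfolding r_def T_def by (simp add: field_simps)
    have "(\<Sum>z\<in>Z. phi (mm z)) = (\<Sum>z\<in>Z. phi ((2 * r) * ((V False z + V True z) / 2) + (1 - (2 * r)) * V False z))"
      by (intro sum.cong refl arg_cong[where f=phi]) (simp add: mm_def field_simps)
    also have "\<dots> \<ge> (2 * r) * gh + (1 - (2 * r)) * HV False"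
      using r rh by (intro mix_half) auto
    finally have g: "(\<Sum>z\<in>Z. phi (mm z)) \<ge> (2 * r) * gh + (1 - 2 * r) * HV False" by simp
    have "T * (\<Sum>z\<in>Z. phi (mm z)) \<ge> T * ((2 * r) * gh + (1 - 2 * r) * HV False)"
      using g T by (intro mult_left_mono) auto
    also have "T * ((2 * r) * gh + (1 - 2 * r) * HV False) = 2 * J1 * gh + (J0 - J1) * HV False"
      by (simp add: J0r J1r algebra_simps)
    finally have A: "T * (\<Sum>z\<in>Z. phi (mm z)) \<ge> 2 * J1 * gh + (J0 - J1) * HV False" .
    have B: "(J0 - J1) * (HV False - gh + Kc) \<ge> 0" using False Kc1 by (intro mult_nonneg_nonneg) auto
    have mn: "min J0 J1 = J1" using False by simp
    show ?thesis unfolding L mn using A B by (simp add: algebra_simps)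
  qed
qed


definition qf where "qf y = (\<Sum>x\<in>C. lik x y) / card C"
definition pe' where "pe' k = (\<Sum>w\<in>PiE ({..<m}-{k}) (\<lambda>_. Z). min (joint_ext m C V k False w) (joint_ext m C V k True w))"

lemma lik_split: "k < m \<Longrightarrow> lik x y = V (x k) (y k) * (\<Prod>i\<in>{..<m}-{k}. V (x i) (y i))"
  unfolding lik_def by (intro prod.remove) auto

lemma sumC_split:
  "(\<Sum>x\<in>C. F x) = (\<Sum>x\<in>{x\<in>C. x k = False}. F x) + (\<Sum>x\<in>{x\<in>C. x k = True}. F x)"
proof -
  have C: "C = {x\<in>C. x k = False} \<union> {x\<in>C. x k = True}" by auto
  show ?thesis using finC by (subst C, intro sum.union_disjoint) auto
qed

lemma joint_nn: "joint_ext m C V k b w \<ge> 0"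
  unfolding joint_ext_def using Vnn by (intro divide_nonneg_nonneg sum_nonneg prod_nonneg) auto

lemma joint_upd: "joint_ext m C V k b (w(k := z)) = joint_ext m C V k b w"
  unfolding joint_ext_def by (intro arg_cong[where f="\<lambda>t. t / real (card C)"] sum.cong prod.cong refl) auto

lemma T_split:
  "(\<Sum>x\<in>C. \<Prod>i\<in>{..<m}-{k}. V (x i) (y i)) / card C = joint_ext m C V k False y + joint_ext m C V k True y"
  unfolding joint_ext_def by (subst sumC_split[of _ k]) (simp add: add_divide_distrib)

lemma q_split:
  assumes k: "k < m"
  shows "qf y = V False (y k) * joint_ext m C V k False y + V True (y k) * joint_ext m C V k True y"
proof -
  have "qf y = (\<Sum>x\<in>C. V (x k) (y k) * (\<Prod>i\<in>{..<m}-{k}. V (x i) (y i))) / card C"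
    unfolding qf_def using lik_split[OF k] by simp
  also have "\<dots> = ((\<Sum>x\<in>{x\<in>C. x k = False}. V False (y k) * (\<Prod>i\<in>{..<m}-{k}. V (x i) (y i)))
                  + (\<Sum>x\<in>{x\<in>C. x k = True}. V True (y k) * (\<Prod>i\<in>{..<m}-{k}. V (x i) (y i)))) / card C"
    by (subst sumC_split[of _ k]) (intro arg_cong2[where f="\<lambda>a b. (a + b) / real (card C)"] sum.cong refl; auto)
  also have "\<dots> = V False (y k) * joint_ext m C V k False y + V True (y k) * joint_ext m C V k True y"
    unfolding joint_ext_def by (simp add: sum_distrib_left[symmetric] add_divide_distrib)
  finally show ?thesis .
qed

lemma sum_filter_AA: "sum pj {a\<in>AA. P a} = sum pj {a\<in>C \<times> YY. P a}"
proof (rule sum.mono_neutral_left)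
  show "finite {a\<in>C \<times> YY. P a}" using finC finYY by auto
  show "{a\<in>AA. P a} \<subseteq> {a\<in>C \<times> YY. P a}" unfolding AA_def by auto
  show "\<forall>i\<in>{a\<in>C \<times> YY. P a} - {a\<in>AA. P a}. pj i = 0"
    using pj_nn unfolding AA_def by (auto simp: order.order_iff_strict)
qed

lemma sum_pj_prod: "sum pj (C \<times> S) = (\<Sum>x\<in>C. \<Sum>y\<in>S. pj (x, y))"
  by (simp add: sum.cartesian_product)

lemma Qfull:
  assumes a: "a \<in> AA"
  shows "Qv AA pj (\<lambda>a. restrict (snd a) {..<m}) (restrict (snd a) {..<m}) = qf (snd a)"
proof -
  have y: "snd a \<in> YY" using a unfolding AA_def by auto
  have r: "\<And>y'. y' \<in> YY \<Longrightarrow> restrict y' {..<m} = y'" unfolding YY_def by (rule PiE_restrict)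
  have "{a'\<in>C \<times> YY. restrict (snd a') {..<m} = restrict (snd a) {..<m}} = C \<times> {snd a}"
    using y r by auto
  hence "Qv AA pj (\<lambda>a. restrict (snd a) {..<m}) (restrict (snd a) {..<m}) = sum pj (C \<times> {snd a})"
    unfolding Qv_def sum_filter_AA by simp
  also have "\<dots> = qf (snd a)" unfolding sum_pj_prod qf_def pj_def by (simp add: sum_divide_distrib)
  finally show ?thesis .
qed

lemma YY_fiber:
  assumes k: "k < m" and y: "y \<in> YY"
  shows "{y'\<in>YY. restrict y' ({..<m}-{k}) = restrict y ({..<m}-{k})} = (\<lambda>z. y(k := z)) ` Z"
proof
  show "{y'\<in>YY. restrict y' ({..<m}-{k}) = restrict y ({..<m}-{k})} \<subseteq> (\<lambda>z. y(k := z)) ` Z"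
  proof
    fix y' assume y': "y' \<in> {y'\<in>YY. restrict y' ({..<m}-{k}) = restrict y ({..<m}-{k})}"
    have "y' = y(k := y' k)"
    proof
      fix i show "y' i = (y(k := y' k)) i"
      proof (cases "i = k")
        case False
        show ?thesis
        proof (cases "i < m")
          case True thus ?thesis using y' False by (auto simp: restrict_eq_iff)
        next
          case F2: False thus ?thesis using y' y False unfolding YY_def by (auto simp: PiE_def extensional_def)
        qed
      qed simp
    qed
    moreover have "y' k \<in> Z" using y' k unfolding YY_def by auto
    ultimately show "y' \<in> (\<lambda>z. y(k := z)) ` Z" by blast
  qed
next
  show "(\<lambda>z. y(k := z)) ` Z \<subseteq> {y'\<in>YY. restrict y' ({..<m}-{k}) = restrict y ({..<m}-{k})}"
  proof
    fix y' assume "y' \<in> (\<lambda>z. y(k := z)) ` Z"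
    then obtain z where z: "z \<in> Z" "y' = y(k := z)" by auto
    have "y(k := z) \<in> YY" using y k z(1) unfolding YY_def by (auto simp: PiE_iff extensional_def)
    moreover have "restrict (y(k := z)) ({..<m}-{k}) = restrict y ({..<m}-{k})"
      by (rule restrict_ext) auto
    ultimately show "y' \<in> {y'\<in>YY. restrict y' ({..<m}-{k}) = restrict y ({..<m}-{k})}" using z by simp
  qed
qed

lemma QD:
  assumes k: "k < m" and a: "a \<in> AA"
  shows "Qv AA pj (\<lambda>a. restrict (snd a) ({..<m}-{k})) (restrict (snd a) ({..<m}-{k}))
           = joint_ext m C V k False (snd a) + joint_ext m C V k True (snd a)"
proof -
  define y where "y = snd a"
  have y: "y \<in> YY" using a unfolding AA_def y_def by auto
  have "{a'\<in>C \<times> YY. restrict (snd a') ({..<m}-{k}) = restrict y ({..<m}-{k})}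
        = C \<times> {y'\<in>YY. restrict y' ({..<m}-{k}) = restrict y ({..<m}-{k})}" by auto
  also have "\<dots> = C \<times> ((\<lambda>z. y(k := z)) ` Z)" using YY_fiber[OF k y] by simp
  finally have S: "{a'\<in>C \<times> YY. restrict (snd a') ({..<m}-{k}) = restrict y ({..<m}-{k})} = C \<times> ((\<lambda>z. y(k := z)) ` Z)" .
  have inj: "inj_on (\<lambda>z. y(k := z)) Z" by (auto simp: inj_on_def fun_eq_iff dest: spec[of _ k])
  have "Qv AA pj (\<lambda>a. restrict (snd a) ({..<m}-{k})) (restrict y ({..<m}-{k})) = sum pj (C \<times> ((\<lambda>z. y(k := z)) ` Z))"
    unfolding Qv_def sum_filter_AA S ..
  also have "\<dots> = (\<Sum>x\<in>C. \<Sum>z\<in>Z. pj (x, y(k := z)))"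
    unfolding sum_pj_prod using inj by (simp add: sum.reindex)
  also have "\<dots> = (\<Sum>x\<in>C. (\<Prod>i\<in>{..<m}-{k}. V (x i) (y i)) / card C)"
  proof (intro sum.cong refl)
    fix x assume "x \<in> C"
    have "(\<Sum>z\<in>Z. pj (x, y(k := z))) = (\<Sum>z\<in>Z. V (x k) z * ((\<Prod>i\<in>{..<m}-{k}. V (x i) (y i)) / card C))"
    proof (intro sum.cong refl)
      fix z
      have "(\<Prod>i\<in>{..<m}-{k}. V (x i) ((y(k := z)) i)) = (\<Prod>i\<in>{..<m}-{k}. V (x i) (y i))"
        by (intro prod.cong) auto
      thus "pj (x, y(k := z)) = V (x k) z * ((\<Prod>i\<in>{..<m}-{k}. V (x i) (y i)) / card C)"
        unfolding pj_def using lik_split[OF k, of x "y(k := z)"] by simp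
    qed
    also have "\<dots> = (\<Prod>i\<in>{..<m}-{k}. V (x i) (y i)) / card C"
      by (simp only: sum_distrib_right[symmetric] Vsum mult_1)
    finally show "(\<Sum>z\<in>Z. pj (x, y(k := z))) = (\<Prod>i\<in>{..<m}-{k}. V (x i) (y i)) / card C" .
  qed
  also have "\<dots> = joint_ext m C V k False y + joint_ext m C V k True y"
    by (simp add: sum_divide_distrib[symmetric] T_split)
  finally show ?thesis unfolding y_def .
qed


lemma sum_YY_split:
  assumes k: "k < m"
  shows "(\<Sum>y\<in>YY. F y) = (\<Sum>w\<in>PiE ({..<m}-{k}) (\<lambda>_. Z). \<Sum>z\<in>Z. F (w(k := z)))"
proof -
  define P where "P = PiE ({..<m}-{k}) (\<lambda>_. Z)"
  define g where "g = (\<lambda>(w::nat \<Rightarrow> 'z, z::'z). w(k := z))"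
  have inj: "inj_on g (P \<times> Z)"
  proof (rule inj_onI)
    fix u v assume u: "u \<in> P \<times> Z" and v: "v \<in> P \<times> Z" and e: "g u = g v"
    obtain w z where wz: "u = (w, z)" by (cases u)
    obtain w' z' where wz': "v = (w', z')" by (cases v)
    have e': "w(k := z) = w'(k := z')" using e unfolding g_def wz wz' by simp
    have "z = z'" using fun_cong[OF e', of k] by simp
    moreover have "w = w'"
    proof
      fix i show "w i = w' i"
      proof (cases "i = k")
        case True
        have "w k = undefined" "w' k = undefined" using u v unfolding wz wz' P_def by (auto simp: PiE_def extensional_def)
        thus ?thesis using True by simp
      next
        case False thus ?thesis using fun_cong[OF e', of i] by simp
      qed
    qed
    ultimately show "u = v" unfolding wz wz' by simp
  qed
  have img: "g ` (P \<times> Z) = YY"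
  proof
    show "g ` (P \<times> Z) \<subseteq> YY"
    proof
      fix y assume "y \<in> g ` (P \<times> Z)"
      then obtain w z where wz: "w \<in> P" "z \<in> Z" "y = w(k := z)" unfolding g_def by auto
      have w1: "\<forall>i\<in>{..<m}-{k}. w i \<in> Z" and w2: "\<forall>i. i \<notin> {..<m}-{k} \<longrightarrow> w i = undefined"
        using wz(1) unfolding P_def PiE_iff extensional_def by auto
      have "\<forall>i\<in>{..<m}. (w(k := z)) i \<in> Z" using w1 wz(2) by auto
      moreover have "\<forall>i. i \<notin> {..<m} \<longrightarrow> (w(k := z)) i = undefined" using w2 k by auto
      ultimately show "y \<in> YY" unfolding wz(3) YY_def PiE_iff extensional_def by auto
    qed
  next
    show "YY \<subseteq> g ` (P \<times> Z)"
    proof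
      fix y assume y: "y \<in> YY"
      have "y = g (restrict y ({..<m}-{k}), y k)"
      proof
        fix i show "y i = g (restrict y ({..<m}-{k}), y k) i"
          using y unfolding g_def YY_def by (cases "i = k") (auto simp: PiE_def extensional_def)
      qed
      moreover have "(restrict y ({..<m}-{k}), y k) \<in> P \<times> Z"
        using y k unfolding P_def YY_def by auto
      ultimately show "y \<in> g ` (P \<times> Z)" by blast
    qed
  qed
  have "(\<Sum>w\<in>P. \<Sum>z\<in>Z. F (w(k := z))) = (\<Sum>u\<in>P \<times> Z. F (g u))"
    unfolding g_def by (simp add: sum.cartesian_product split_beta)
  also have "\<dots> = (\<Sum>y\<in>g ` (P \<times> Z). F y)" by (simp add: sum.reindex[OF inj] o_def)
  also have "\<dots> = (\<Sum>y\<in>YY. F y)" unfolding img ..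
  finally show ?thesis unfolding P_def by simp
qed

lemma sumT:
  assumes k: "k < m"
  shows "(\<Sum>w\<in>PiE ({..<m}-{k}) (\<lambda>_. Z). joint_ext m C V k False w + joint_ext m C V k True w) = 1"
proof -
  have "(\<Sum>w\<in>PiE ({..<m}-{k}) (\<lambda>_. Z). joint_ext m C V k False w + joint_ext m C V k True w)
      = (\<Sum>w\<in>PiE ({..<m}-{k}) (\<lambda>_. Z). \<Sum>x\<in>C. (\<Prod>i\<in>{..<m}-{k}. V (x i) (w i)) / card C)"
    by (simp add: T_split[symmetric] sum_divide_distrib)
  also have "\<dots> = (\<Sum>x\<in>C. (\<Sum>w\<in>PiE ({..<m}-{k}) (\<lambda>_. Z). \<Prod>i\<in>{..<m}-{k}. V (x i) (w i)) / card C)"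
    by (subst sum.swap) (simp add: sum_divide_distrib)
  also have "\<dots> = (\<Sum>x\<in>C. 1 / card C)"
  proof (intro sum.cong refl)
    fix x
    have "(\<Sum>w\<in>PiE ({..<m}-{k}) (\<lambda>_. Z). \<Prod>i\<in>{..<m}-{k}. V (x i) (w i)) = (\<Prod>i\<in>{..<m}-{k}. \<Sum>z\<in>Z. V (x i) z)"
      using finZ by (intro prod_sum_PiE[symmetric]) auto
    also have "\<dots> = 1" by (simp add: Vsum)
    finally show "(\<Sum>w\<in>PiE ({..<m}-{k}) (\<lambda>_. Z). \<Prod>i\<in>{..<m}-{k}. V (x i) (w i)) / card C = 1 / card C" by simp
  qed
  also have "\<dots> = 1" using cardC by simp
  finally show ?thesis .
qed

lemma entC:
  assumes k: "k < m"
  shows "Ef {..<m} - Ef ({..<m}-{k}) \<ge> gh - Kc * (1 - 2 * pe' k)"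
proof -
  define D where "D = {..<m}-{k}"
  define T where "T = (\<lambda>y. joint_ext m C V k False y + joint_ext m C V k True y)"
  define QF where "QF = (\<lambda>a::(nat\<Rightarrow>bool)\<times>(nat\<Rightarrow>'z). Qv AA pj (\<lambda>a. restrict (snd a) {..<m}) (restrict (snd a) {..<m}))"
  define QD' where "QD' = (\<lambda>a::(nat\<Rightarrow>bool)\<times>(nat\<Rightarrow>'z). Qv AA pj (\<lambda>a. restrict (snd a) D) (restrict (snd a) D))"
  have QFp: "QF a > 0" if "a \<in> AA" for a unfolding QF_def by (rule Qv_pos(2)[of AA pj, OF finAA pj_pos that])
  have QDp: "QD' a > 0" if "a \<in> AA" for a unfolding QD'_def by (rule Qv_pos(2)[of AA pj, OF finAA pj_pos that])
  have "Ef {..<m} - Ef D = (\<Sum>a\<in>AA. pj a * log 2 (QD' a)) - (\<Sum>a\<in>AA. pj a * log 2 (QF a))"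
    unfolding Ef_def Ent_def QF_def QD'_def by simp
  also have "\<dots> = (\<Sum>a\<in>AA. pj a * (log 2 (QD' a) - log 2 (QF a)))"
    by (simp only: sum_subtractf right_diff_distrib)
  also have "\<dots> = (\<Sum>a\<in>AA. pj a * log 2 (T (snd a) / qf (snd a)))"
  proof (intro sum.cong refl)
    fix a assume a: "a \<in> AA"
    have "QD' a = T (snd a)" unfolding QD'_def T_def D_def by (rule QD[OF k a])
    moreover have "QF a = qf (snd a)" unfolding QF_def by (rule Qfull[OF a])
    ultimately show "pj a * (log 2 (QD' a) - log 2 (QF a)) = pj a * log 2 (T (snd a) / qf (snd a))"
      using QFp[OF a] QDp[OF a] by (simp add: log_divide)
  qed
  also have "\<dots> = (\<Sum>a\<in>C \<times> YY. pj a * log 2 (T (snd a) / qf (snd a)))" by (rule sum_AA)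
  also have "\<dots> = (\<Sum>x\<in>C. \<Sum>y\<in>YY. lik x y / card C * log 2 (T y / qf y))"
    unfolding sum_CY pj_def by simp
  also have "\<dots> = (\<Sum>y\<in>YY. \<Sum>x\<in>C. lik x y / card C * log 2 (T y / qf y))" by (rule sum.swap)
  also have "\<dots> = (\<Sum>y\<in>YY. qf y * log 2 (T y / qf y))"
  proof (intro sum.cong refl)
    fix y
    show "(\<Sum>x\<in>C. lik x y / card C * log 2 (T y / qf y)) = qf y * log 2 (T y / qf y)"
      unfolding qf_def sum_divide_distrib by (rule sum_distrib_right[symmetric])
  qed
  also have "\<dots> = (\<Sum>w\<in>PiE D (\<lambda>_. Z). \<Sum>z\<in>Z. qf (w(k := z)) * log 2 (T (w(k := z)) / qf (w(k := z))))"
    unfolding D_def by (rule sum_YY_split[OF k])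
  also have "\<dots> = (\<Sum>w\<in>PiE D (\<lambda>_. Z). \<Sum>z\<in>Z.
      (V False z * joint_ext m C V k False w + V True z * joint_ext m C V k True w) *
      log 2 ((joint_ext m C V k False w + joint_ext m C V k True w) / (V False z * joint_ext m C V k False w + V True z * joint_ext m C V k True w)))"
    by (intro sum.cong refl) (simp add: q_split[OF k] T_def joint_upd)
  also have "\<dots> \<ge> (\<Sum>w\<in>PiE D (\<lambda>_. Z). (joint_ext m C V k False w + joint_ext m C V k True w) * gh
       - Kc * (joint_ext m C V k False w + joint_ext m C V k True w - 2 * min (joint_ext m C V k False w) (joint_ext m C V k True w)))"
    by (intro sum_mono mix_bound joint_nn)
  also have "(\<Sum>w\<in>PiE D (\<lambda>_. Z). (joint_ext m C V k False w + joint_ext m C V k True w) * gh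
       - Kc * (joint_ext m C V k False w + joint_ext m C V k True w - 2 * min (joint_ext m C V k False w) (joint_ext m C V k True w)))
      = (\<Sum>w\<in>PiE D (\<lambda>_. Z). joint_ext m C V k False w + joint_ext m C V k True w) * gh
        - Kc * ((\<Sum>w\<in>PiE D (\<lambda>_. Z). joint_ext m C V k False w + joint_ext m C V k True w)
                - 2 * (\<Sum>w\<in>PiE D (\<lambda>_. Z). min (joint_ext m C V k False w) (joint_ext m C V k True w)))"
    by (simp add: sum_subtractf sum_distrib_left sum_distrib_right right_diff_distrib)
  also have "\<dots> = gh - Kc * (1 - 2 * pe' k)"
    using sumT[OF k] unfolding D_def pe'_def by simp
  finally show ?thesis unfolding D_def .
qed

lemma core_main:
  "log 2 (card C) \<ge> m * (gh - (HV False + HV True) / 2) - Kc * (\<Sum>k<m. 1 - 2 * pe' k)"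
proof -
  have "(\<Sum>k<m. gh - Kc * (1 - 2 * pe' k)) \<le> (\<Sum>k<m. Ef {..<m} - Ef ({..<m}-{k}))"
    using entC by (intro sum_mono) auto
  also have "\<dots> \<le> Ef {..<m}" by (rule Han)
  also have "\<dots> \<le> log 2 (card C) + m * ((HV False + HV True) / 2)" by (rule entA)
  finally have "(\<Sum>k<m. gh - Kc * (1 - 2 * pe' k)) \<le> log 2 (card C) + m * ((HV False + HV True) / 2)" .
  moreover have "(\<Sum>k<m. gh - Kc * (1 - 2 * pe' k)) = m * gh - Kc * (\<Sum>k<m. 1 - 2 * pe' k)"
  proof -
    have "(\<Sum>k<m. gh - Kc * (1 - 2 * pe' k)) = (\<Sum>k<m. gh) - (\<Sum>k<m. Kc * (1 - 2 * pe' k))"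
      by (rule sum_subtractf)
    also have "(\<Sum>k<m. Kc * (1 - 2 * pe' k)) = Kc * (\<Sum>k<m. 1 - 2 * pe' k)"
      by (rule sum_distrib_left[symmetric])
    finally show ?thesis by simp
  qed
  ultimately show ?thesis by (simp add: algebra_simps)
qed


lemma cap_eq:
  "(1/2) * (\<Sum>z\<in>Z. \<Sum>b\<in>UNIV. V b z * log 2 (V b z / (V False z / 2 + V True z / 2)))
     = gh - (HV False + HV True) / 2"
proof -
  have "(\<Sum>b\<in>UNIV. V b z * log 2 (V b z / (V False z / 2 + V True z / 2)))
      = 2 * phi ((V False z + V True z) / 2) - phi (V False z) - phi (V True z)" for z
  proof -
    have a: "V False z / 2 + V True z / 2 \<ge> V b z / 2" for b using Vnn[of False z] Vnn[of True z] by (cases b) auto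
    have "(\<Sum>b\<in>UNIV. V b z * log 2 (V b z / (V False z / 2 + V True z / 2)))
       = V False z * log 2 (V False z / (V False z / 2 + V True z / 2)) + V True z * log 2 (V True z / (V False z / 2 + V True z / 2))"
      by (simp add: UNIV_bool)
    also have "\<dots> = 2 * phi ((V False z + V True z) / 2) - phi (V False z) - phi (V True z)"
      unfolding cap_term[OF Vnn a] phi_def by (simp add: algebra_simps add_divide_distrib)
    finally show ?thesis .
  qed
  hence "(1/2) * (\<Sum>z\<in>Z. \<Sum>b\<in>UNIV. V b z * log 2 (V b z / (V False z / 2 + V True z / 2)))
      = (1/2) * (\<Sum>z\<in>Z. 2 * phi ((V False z + V True z) / 2) - phi (V False z) - phi (V True z))" by simp
  also have "\<dots> = gh - (HV False + HV True) / 2"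
    unfolding gh_def HV_def by (simp add: sum_subtractf sum_distrib_left[symmetric] sum.distrib algebra_simps)
  finally show ?thesis .
qed

lemma Kc_nn: "Kc \<ge> 0" unfolding Kc_def by simp

lemma core_rate:
  assumes p: "\<And>k. k < m \<Longrightarrow> pe' k \<ge> p"
  shows "log 2 (card C) \<ge> m * ((1/2) * (\<Sum>z\<in>Z. \<Sum>b\<in>UNIV. V b z * log 2 (V b z / (V False z / 2 + V True z / 2))) - Kc * (1 - 2 * p))"
proof -
  have "(\<Sum>k<m. 1 - 2 * pe' k) \<le> (\<Sum>k<m. 1 - 2 * p)" using p by (intro sum_mono) auto
  hence "Kc * (\<Sum>k<m. 1 - 2 * pe' k) \<le> Kc * (\<Sum>k<m. 1 - 2 * p)" using Kc_nn by (rule mult_left_mono)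
  moreover have "Kc * (\<Sum>k<m. 1 - 2 * p) = m * (Kc * (1 - 2 * p))" by simp
  ultimately show ?thesis using core_main unfolding cap_eq by (simp add: algebra_simps)
qed

end


definition Qz :: "'y set \<Rightarrow> 'y \<Rightarrow> 'y option" where
  "Qz F t = (if t \<in> F then Some t else None)"
definition Vq :: "(bool \<Rightarrow> 'y \<Rightarrow> real) \<Rightarrow> 'y set \<Rightarrow> bool \<Rightarrow> 'y option \<Rightarrow> real" where
  "Vq W F b z = (case z of Some y \<Rightarrow> W b y | None \<Rightarrow> 1 - sum (W b) F)"
definition Zq :: "'y set \<Rightarrow> 'y option set" where
  "Zq F = insert None (Some ` F)"

lemma csym_nn:
  fixes a b :: real
  assumes "a \<ge> 0" "b \<ge> 0"
  shows "a * log 2 (a / (a / 2 + b / 2)) + b * log 2 (b / (a / 2 + b / 2)) \<ge> 0"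
proof (cases "a / 2 + b / 2 = 0")
  case True
  hence "a = 0" "b = 0" using assms by auto
  thus ?thesis by simp
next
  case False
  hence m: "a / 2 + b / 2 > 0" using assms by simp
  have "a * log 2 (a / (a / 2 + b / 2)) + b * log 2 (b / (a / 2 + b / 2))
      = (a * log 2 a - a * log 2 (a / 2 + b / 2)) + (b * log 2 b - b * log 2 (a / 2 + b / 2))"
    using assms by (simp add: cap_term)
  also have "\<dots> \<ge> (a - (a / 2 + b / 2)) / ln 2 + (b - (a / 2 + b / 2)) / ln 2"
    by (intro add_mono gibbs0 assms m)
  also have "(a - (a / 2 + b / 2)) / ln 2 + (b - (a / 2 + b / 2)) / ln 2 = 0"
    by (simp add: field_simps)
  finally show ?thesis by simp
qed

locale chan =
  fixes W :: "bool \<Rightarrow> 'y \<Rightarrow> real" and F :: "'y set"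
  assumes Wnn: "\<And>b y. W b y \<ge> 0" and Wsum: "\<And>b. (W b has_sum 1) UNIV" and finF: "finite F"
begin

lemma sum_le1: "finite T \<Longrightarrow> sum (W b) T \<le> 1"
  using Wnn by (intro finite_sum_le_has_sum[OF Wsum]) auto

lemma Vq_nn: "Vq W F b z \<ge> 0"
  unfolding Vq_def using Wnn sum_le1[OF finF] by (cases z) auto

lemma finZq: "finite (Zq F)" unfolding Zq_def using finF by simp

lemma Vq_sum: "sum (Vq W F b) (Zq F) = 1"
proof -
  have "sum (Vq W F b) (Zq F) = Vq W F b None + sum (Vq W F b) (Some ` F)"
    unfolding Zq_def using finF by (subst sum.insert) auto
  also have "sum (Vq W F b) (Some ` F) = sum (W b) F"
    by (subst sum.reindex) (auto simp: Vq_def)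
  finally show ?thesis by (simp add: Vq_def)
qed

lemma sumT_le:
  assumes T: "finite T" "\<And>t. t \<in> T \<Longrightarrow> Qz F t = z"
  shows "sum (W b) T \<le> Vq W F b z"
proof (cases z)
  case None
  have TF: "T \<inter> F = {}"
  proof (rule ccontr)
    assume "T \<inter> F \<noteq> {}"
    then obtain t where "t \<in> T" "t \<in> F" by auto
    thus False using T(2)[of t] None by (simp add: Qz_def)
  qed
  have "sum (W b) T + sum (W b) F = sum (W b) (T \<union> F)"
    using T(1) finF TF by (simp add: sum.union_disjoint)
  also have "\<dots> \<le> 1" using T(1) finF by (intro sum_le1) auto
  finally show ?thesis using None by (simp add: Vq_def)
next
  case (Some y0)
  have "T \<subseteq> {y0}"
  proof
    fix t assume "t \<in> T"
    thus "t \<in> {y0}" using T(2)[of t] Some by (simp add: Qz_def split: if_splits)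
  qed
  hence "sum (W b) T \<le> sum (W b) {y0}" using Wnn by (intro sum_mono2) auto
  thus ?thesis using Some by (simp add: Vq_def)
qed

lemma prod_le:
  assumes S: "finite S" and D: "finite D"
    and ext: "\<And>y. y \<in> S \<Longrightarrow> y \<in> extensional D"
    and q: "\<And>y i. y \<in> S \<Longrightarrow> i \<in> D \<Longrightarrow> Qz F (y i) = w i"
  shows "(\<Sum>y\<in>S. \<Prod>i\<in>D. W (x i) (y i)) \<le> (\<Prod>i\<in>D. Vq W F (x i) (w i))"
proof -
  define T where "T = (\<lambda>i. (\<lambda>y. y i) ` S)"
  have finT: "finite (T i)" for i unfolding T_def using S by simp
  have sub: "S \<subseteq> PiE D T" unfolding T_def using ext by (auto simp: PiE_def)
  have "(\<Sum>y\<in>S. \<Prod>i\<in>D. W (x i) (y i)) \<le> (\<Sum>y\<in>PiE D T. \<Prod>i\<in>D. W (x i) (y i))"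
    using sub D finT Wnn by (intro sum_mono2 prod_nonneg finite_PiE) auto
  also have "\<dots> = (\<Prod>i\<in>D. \<Sum>t\<in>T i. W (x i) t)"
    using D finT by (intro prod_sum_PiE[symmetric]) auto
  also have "\<dots> \<le> (\<Prod>i\<in>D. Vq W F (x i) (w i))"
  proof (rule prod_mono)
    fix i assume i: "i \<in> D"
    have "sum (W (x i)) (T i) \<le> Vq W F (x i) (w i)"
      by (rule sumT_le[OF finT]) (use q i in \<open>auto simp: T_def\<close>)
    thus "0 \<le> (\<Sum>t\<in>T i. W (x i) t) \<and> (\<Sum>t\<in>T i. W (x i) t) \<le> Vq W F (x i) (w i)"
      using Wnn by (auto intro: sum_nonneg)
  qed
  finally show ?thesis .
qed

end


lemma degrade:
  fixes W :: "bool \<Rightarrow> 'y::countable \<Rightarrow> real"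
  assumes ch: "chan W F" and finC: "finite C"
  shows "Pe n C W j \<le> (\<Sum>w\<in>PiE ({..<n}-{j}) (\<lambda>_. Zq F).
            min (joint_ext n C (Vq W F) j False w) (joint_ext n C (Vq W F) j True w))"
proof -
  interpret chan W F by (rule ch)
  define D where "D = {..<n}-{j}"
  define f where "f = (\<lambda>y. min (joint_ext n C W j False y) (joint_ext n C W j True y))"
  define P' where "P' = (\<Sum>w\<in>PiE D (\<lambda>_. Zq F). min (joint_ext n C (Vq W F) j False w) (joint_ext n C (Vq W F) j True w))"
  have jV: "joint_ext n C (Vq W F) j b w \<ge> 0" for b w
    unfolding joint_ext_def using Vq_nn by (intro divide_nonneg_nonneg sum_nonneg prod_nonneg) auto
  have P'nn: "P' \<ge> 0" unfolding P'_def using jV by (intro sum_nonneg) auto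
  have finD: "finite D" unfolding D_def by simp
  have ext: "y \<in> ext_outputs n j \<Longrightarrow> y \<in> extensional D" for y
    unfolding ext_outputs_def extensional_def D_def by auto
  have "Pe n C W j \<le> P'"
  proof (cases "f summable_on ext_outputs n j")
    case False
    hence "Pe n C W j = 0" unfolding Pe_def f_def[symmetric] by (rule infsum_not_exists)
    thus ?thesis using P'nn by simp
  next
    case True
    have "infsum f (ext_outputs n j) \<le> P'"
    proof (rule infsum_le_finite_sums[OF True])
      fix S :: "(nat \<Rightarrow> 'y) set" assume S: "finite S" "S \<subseteq> ext_outputs n j"
      define qq where "qq = (\<lambda>y::nat \<Rightarrow> 'y. \<lambda>i. if i \<in> D then Qz F (y i) else undefined)"
      have qqS: "qq ` S \<subseteq> PiE D (\<lambda>_. Zq F)"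
        unfolding qq_def by (auto simp: PiE_def extensional_def Qz_def Zq_def)
      have "sum f S = (\<Sum>w\<in>qq ` S. sum f {y\<in>S. qq y = w})"
        using S(1) by (rule sum.image_gen)
      also have "\<dots> \<le> (\<Sum>w\<in>qq ` S. min (joint_ext n C (Vq W F) j False w) (joint_ext n C (Vq W F) j True w))"
      proof (rule sum_mono)
        fix w assume "w \<in> qq ` S"
        define Sw where "Sw = {y\<in>S. qq y = w}"
        have finSw: "finite Sw" unfolding Sw_def using S(1) by simp
        have bnd: "sum (joint_ext n C W j b) Sw \<le> joint_ext n C (Vq W F) j b w" for b
        proof -
          have "sum (joint_ext n C W j b) Sw
              = (\<Sum>x\<in>{x\<in>C. x j = b}. \<Sum>y\<in>Sw. \<Prod>k\<in>D. W (x k) (y k)) / card C"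
            unfolding joint_ext_def D_def by (simp add: sum_divide_distrib[symmetric] sum.swap[of _ Sw])
          also have "\<dots> \<le> (\<Sum>x\<in>{x\<in>C. x j = b}. \<Prod>k\<in>D. Vq W F (x k) (w k)) / card C"
          proof (intro divide_right_mono sum_mono)
            fix x
            show "(\<Sum>y\<in>Sw. \<Prod>k\<in>D. W (x k) (y k)) \<le> (\<Prod>k\<in>D. Vq W F (x k) (w k))"
            proof (rule prod_le[OF finSw finD])
              fix y assume "y \<in> Sw"
              thus "y \<in> extensional D" using S(2) ext unfolding Sw_def by auto
            next
              fix y i assume y: "y \<in> Sw" and i: "i \<in> D"
              hence "qq y = w" unfolding Sw_def by simp
              thus "Qz F (y i) = w i" using i unfolding qq_def by auto
            qed
          qed simp
          also have "\<dots> = joint_ext n C (Vq W F) j b w" unfolding joint_ext_def D_def ..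
          finally show ?thesis .
        qed
        have "sum f Sw \<le> sum (joint_ext n C W j False) Sw" unfolding f_def by (intro sum_mono) simp
        moreover have "sum f Sw \<le> sum (joint_ext n C W j True) Sw" unfolding f_def by (intro sum_mono) simp
        ultimately show "sum f {y\<in>S. qq y = w} \<le> min (joint_ext n C (Vq W F) j False w) (joint_ext n C (Vq W F) j True w)"
          using bnd[of False] bnd[of True] unfolding Sw_def by simp
      qed
      also have "\<dots> \<le> P'"
        unfolding P'_def using qqS jV finD by (intro sum_mono2 finite_PiE finZq) auto
      finally show "sum f S \<le> P'" .
    qed
    thus ?thesis unfolding Pe_def f_def .
  qed
  thus ?thesis unfolding P'_def D_def .
qed


lemma finite_code:
  assumes "binary_code n C"
  shows "finite C" "C \<noteq> {}"
proof -
  have "{x::nat\<Rightarrow>bool. \<forall>k\<ge>n. x k = False} \<subseteq> (\<lambda>S k. k \<in> S) ` Pow {..<n}"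
  proof
    fix x :: "nat \<Rightarrow> bool" assume x: "x \<in> {x. \<forall>k\<ge>n. x k = False}"
    have "x = (\<lambda>k. k \<in> {k\<in>{..<n}. x k})"
    proof
      fix k show "x k = (k \<in> {k\<in>{..<n}. x k})" using x by (cases "k < n") auto
    qed
    thus "x \<in> (\<lambda>S k. k \<in> S) ` Pow {..<n}" by blast
  qed
  hence "finite {x::nat\<Rightarrow>bool. \<forall>k\<ge>n. x k = False}" by (rule finite_subset) simp
  thus "finite C" using assms unfolding binary_code_def by (auto intro: finite_subset)
  show "C \<noteq> {}" using assms unfolding binary_code_def by auto
qed

theorem lemma2:
  fixes W :: "bool \<Rightarrow> 'y::countable \<Rightarrow> real"
    and n :: "nat \<Rightarrow> nat"
    and C :: "nat \<Rightarrow> (nat \<Rightarrow> bool) set"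
    and pe :: "nat \<Rightarrow> real"
  assumes "bms_channel W"
    and "\<And>i. n i > 0"
    and "\<And>i. binary_code (n i) (C i)"
    and "limsup (\<lambda>i. ereal (code_rate (n i) (C i))) < ereal (capacity W)"
    and "\<And>i j. j < n i \<Longrightarrow> 2 * card {x\<in>C i. x j} = card (C i)"
    and "\<And>i j. j < n i \<Longrightarrow> Pe (n i) (C i) W j = pe i"
  shows "\<exists>c>0. \<forall>\<^sub>F i in sequentially. pe i < 1/2 - c"
proof -
  have Wnn: "\<And>b y. W b y \<ge> 0" and Wsum: "\<And>b. (W b has_sum 1) UNIV"
    using assms(1) unfolding bms_channel_def by auto
  define c where "c = (\<lambda>y. \<Sum>x\<in>UNIV. W x y * log 2 (W x y / (W False y / 2 + W True y / 2)))"
  have cap: "capacity W = (1/2) * infsum c UNIV" unfolding capacity_def c_def ..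
  have finC: "finite (C i)" and neC: "C i \<noteq> {}" for i using finite_code[OF assms(3)] by auto
  have rate_nn: "code_rate (n i) (C i) \<ge> 0" for i
  proof -
    have "card (C i) \<ge> 1" using finC[of i] neC[of i] by (simp add: Suc_le_eq card_gt_0_iff)
    hence "log 2 (card (C i)) \<ge> 0" by simp
    thus ?thesis unfolding code_rate_def by simp
  qed
  obtain r where r1: "limsup (\<lambda>i. ereal (code_rate (n i) (C i))) < ereal r" and r2: "ereal r < ereal (capacity W)"
    using ereal_dense2[OF assms(4)] by blast
  have rcap: "r < capacity W" using r2 by simp
  have ev: "\<forall>\<^sub>F i in sequentially. code_rate (n i) (C i) < r"
    using Limsup_lessD[OF r1] by simp
  then obtain N where "\<And>i. i \<ge> N \<Longrightarrow> code_rate (n i) (C i) < r" unfolding eventually_sequentially by blast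
  hence "0 < r" using rate_nn[of N] by force
  hence cpos: "capacity W > 0" using rcap by simp
  have summ: "c summable_on UNIV"
  proof (rule ccontr)
    assume "\<not> c summable_on UNIV"
    hence "infsum c UNIV = 0" by (rule infsum_not_exists)
    thus False using cpos cap by simp
  qed
  define \<delta> where "\<delta> = (capacity W - r) / 2"
  have \<delta>: "\<delta> > 0" unfolding \<delta>_def using rcap by simp
  obtain F where finF: "finite F" and Fapp: "dist (sum c F) (infsum c UNIV) \<le> \<delta>"
    using has_sum_finite_approximation[OF has_sum_infsum[OF summ] \<delta>] by blast
  have sF: "(1/2) * sum c F \<ge> capacity W - \<delta> / 2"
    using Fapp cap by (simp add: dist_real_def abs_le_iff)
  interpret ch: chan W F using Wnn Wsum finF by unfold_locales auto
  define V where "V = Vq W F"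
  define Z where "Z = Zq F"
  define capV where "capV = (1/2) * (\<Sum>z\<in>Z. \<Sum>b\<in>UNIV. V b z * log 2 (V b z / (V False z / 2 + V True z / 2)))"
  have capV: "capV \<ge> capacity W - \<delta> / 2"
  proof -
    define s where "s = (\<lambda>z. \<Sum>b\<in>UNIV. V b z * log 2 (V b z / (V False z / 2 + V True z / 2)))"
    have "(\<Sum>z\<in>Z. s z) = s None + (\<Sum>z\<in>Some ` F. s z)"
      unfolding Z_def Zq_def using finF by (subst sum.insert) auto
    also have "(\<Sum>z\<in>Some ` F. s z) = sum c F"
      by (subst sum.reindex) (auto simp: s_def c_def V_def Vq_def)
    also have "s None \<ge> 0"
      unfolding s_def using csym_nn[OF ch.Vq_nn ch.Vq_nn, of False None True None]
      by (simp add: UNIV_bool V_def)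
    ultimately have "(\<Sum>z\<in>Z. s z) \<ge> sum c F" by simp
    thus ?thesis using sF unfolding capV_def s_def by simp
  qed
  define K where "K = core.Kc V Z"
  have coreI: "core (n i) (C i) V Z" for i
    by unfold_locales (use ch.finZq ch.Vq_nn ch.Vq_sum finC neC assms(5) in \<open>auto simp: V_def Z_def\<close>)
  have Knn: "K \<ge> 0" unfolding K_def by (rule core.Kc_nn[OF coreI[of 0]])
  define \<epsilon> where "\<epsilon> = \<delta> / (2 * (K + 1))"
  have \<epsilon>: "\<epsilon> > 0" unfolding \<epsilon>_def using \<delta> Knn by simp
  have K\<epsilon>: "2 * K * \<epsilon> < \<delta>"
  proof -
    have "2 * K * \<epsilon> = \<delta> * (K / (K + 1))" unfolding \<epsilon>_def using Knn by (simp add: field_simps)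
    also have "\<dots> < \<delta> * 1" using \<delta> Knn by (intro mult_strict_left_mono) auto
    finally show ?thesis by simp
  qed
  have "\<forall>\<^sub>F i in sequentially. pe i < 1/2 - \<epsilon>"
    using ev
  proof (rule eventually_mono)
    fix i assume ri: "code_rate (n i) (C i) < r"
    show "pe i < 1/2 - \<epsilon>"
    proof (rule ccontr)
      assume "\<not> pe i < 1/2 - \<epsilon>"
      hence pei: "pe i \<ge> 1/2 - \<epsilon>" by simp
      interpret co: core "n i" "C i" V Z by (rule coreI)
      have "co.pe' k \<ge> pe i" if k: "k < n i" for k
      proof -
        have "pe i = Pe (n i) (C i) W k" using assms(6)[OF k] by simp
        also have "\<dots> \<le> co.pe' k" unfolding core.pe'_def[OF coreI] unfolding V_def Z_def
          by (rule degrade[OF ch.chan_axioms finC])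
        finally show ?thesis .
      qed
      hence lg: "log 2 (card (C i)) \<ge> n i * (capV - K * (1 - 2 * pe i))"
        using co.core_rate[of "pe i"] unfolding capV_def K_def by simp
      have "K * (1 - 2 * pe i) \<le> K * (2 * \<epsilon>)" using pei Knn by (intro mult_left_mono) auto
      hence "capV - K * (1 - 2 * pe i) > capV - \<delta>" using K\<epsilon> by simp
      moreover have "capacity W = r + 2 * \<delta>" unfolding \<delta>_def by (simp add: field_simps)
      ultimately have "capV - K * (1 - 2 * pe i) > r" using capV \<delta> by linarith
      moreover have "code_rate (n i) (C i) \<ge> capV - K * (1 - 2 * pe i)"
        using lg assms(2)[of i] unfolding code_rate_def by (simp add: field_simps)
      ultimately show False using ri by simp
    qed
  qed
  thus ?thesis using \<epsilon> by blast
qed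


end
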